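(* Let $Z\subset\mathbb{S}_2$ be a finite nonempty set of points. Then the following are equivalent: (i) $Z\subset\widetilde{L_{12}}\cap(E_1\cup E_2)$; (ii) $\alpha(Z)=\alpha(2Z)=\alpha(3Z)=\alpha(4Z)=\alpha(5Z)=1$.
   Context: Let $P_1,P_2\in\mathbb{P}^2(\mathbb{C})$ be two general (distinct) points and $f\colon\mathbb{S}_2\to\mathbb{P}^2$ the blow-up at them, with exceptional curves $E_i=f^{-1}(P_i)$; let $H$ be the pullback of the class of a line and $\mathbb{L}_2=3H-E_1-E_2=-K_{\mathbb{S}_2}$. $L_{12}$ is the line through $P_1,P_2$ and $\widetilde{L_{12}}$ its proper transform in $\mathbb{S}_2$. For a finite set $Z\subset\mathbb{S}_2$ with ideal sheaf $\mathcal{I}_Z$ and a positive integer $m$, $\alpha(mZ)=\min\{d\ge 0:\ H^0(\mathbb{S}_2,d\mathbb{L}_2\otimes\mathcal{I}_Z^{(m)})\neq 0\}$, i.e. the least $d$ such that some effective divisor $D\in|d\mathbb{L}_2|$ has multiplicity at least $m$ at every point of $Z$. *)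

theory Defs
  imports Complex_Main
begin

(* Coordinates: P1 = [1:0:0], P2 = [0:1:0]; L12 = {z = 0}.
   A homogeneous polynomial in x,y,z is given by its coefficient function
   c (i,j,k) = coefficient of x^i y^j z^k. *)

type_synonym poly3 = "nat \<times> nat \<times> nat \<Rightarrow> complex"

(* i-th power's a-th derivative factor: d^a/dx^a x^i = df i a * x^(i-a) *)
definition df :: "nat \<Rightarrow> nat \<Rightarrow> complex" where
  "df i a = (if a \<le> i then of_nat (fact i) / of_nat (fact (i - a)) else 0)"

definition monoms :: "nat \<Rightarrow> (nat \<times> nat \<times> nat) set" where
  "monoms n = {(i,j,k). i + j + k = n}"

definition homog :: "poly3 \<Rightarrow> nat \<Rightarrow> bool" where
  "homog c n \<longleftrightarrow> (\<forall>i j k. c (i,j,k) \<noteq> 0 \<longrightarrow> i + j + k = n)"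

(* multiplicity of the plane curve {F = 0} at the point [x0:y0:z0] is >= m:
   all partial derivatives of order < m vanish there *)
definition hmult_ge :: "poly3 \<Rightarrow> nat \<Rightarrow> complex \<times> complex \<times> complex \<Rightarrow> nat \<Rightarrow> bool" where
  "hmult_ge c n p m \<longleftrightarrow> (case p of (x0, y0, z0) \<Rightarrow>
     (\<forall>a b e. a + b + e < m \<longrightarrow>
        (\<Sum>(i,j,k)\<in>monoms n. c (i,j,k) * df i a * df j b * df k e
             * x0 ^ (i - a) * y0 ^ (j - b) * z0 ^ (k - e)) = 0))"

(* multiplicity >= m at (0,t0) of the bivariate polynomial
   g(s,t) = sum over (i,j,k) in S of c(i,j,k) * s^(fst (E(i,j,k))) * t^(snd (E(i,j,k))) *)
definition bmult_ge :: "poly3 \<Rightarrow> (nat \<times> nat \<times> nat) set \<Rightarrow> (nat \<times> nat \<times> nat \<Rightarrow> nat \<times> nat)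
     \<Rightarrow> complex \<Rightarrow> nat \<Rightarrow> bool" where
  "bmult_ge c S E t0 m \<longleftrightarrow>
     (\<forall>\<alpha> \<beta>. \<alpha> + \<beta> < m \<longrightarrow>
        (\<Sum>q\<in>S. c q * df (fst (E q)) \<alpha> * df (snd (E q)) \<beta>
             * (0::complex) ^ (fst (E q) - \<alpha>) * t0 ^ (snd (E q) - \<beta>)) = 0)"

(* Points of S_2 (blow-up of P^2 at P1=[1:0:0], P2=[0:1:0]):
   Pl x y z : the point [x:y:z] of P^2 \ {P1,P2};
   Ex1 a b  : the point of E1 = tangent direction [a:b] at P1 in the affine
              coordinates (u,v) = (y/x, z/x);
   Ex2 a b  : the point of E2 = tangent direction [a:b] at P2 in the affine
              coordinates (u,v) = (x/y, z/y).
   Representatives are normalised (first nonzero coordinate equals 1). *)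
datatype s2pt = Pl complex complex complex | Ex1 complex complex | Ex2 complex complex

definition norm3 :: "complex \<Rightarrow> complex \<Rightarrow> complex \<Rightarrow> bool" where
  "norm3 x y z \<longleftrightarrow> x = 1 \<or> (x = 0 \<and> y = 1) \<or> (x = 0 \<and> y = 0 \<and> z = 1)"

definition norm2 :: "complex \<Rightarrow> complex \<Rightarrow> bool" where
  "norm2 a b \<longleftrightarrow> a = 1 \<or> (a = 0 \<and> b = 1)"

fun valid_pt :: "s2pt \<Rightarrow> bool" where
  "valid_pt (Pl x y z) \<longleftrightarrow> norm3 x y z \<and> (x, y, z) \<noteq> (1, 0, 0) \<and> (x, y, z) \<noteq> (0, 1, 0)"
| "valid_pt (Ex1 a b) \<longleftrightarrow> norm2 a b"
| "valid_pt (Ex2 a b) \<longleftrightarrow> norm2 a b"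

(* A nonzero section of d*L2 = d(3H - E1 - E2): a nonzero homogeneous polynomial
   of degree 3d with multiplicity >= d at P1 and at P2. *)
definition section_L :: "nat \<Rightarrow> poly3 \<Rightarrow> bool" where
  "section_L d c \<longleftrightarrow> homog c (3 * d) \<and> (\<exists>q. c q \<noteq> 0)
      \<and> hmult_ge c (3 * d) (1, 0, 0) d \<and> hmult_ge c (3 * d) (0, 1, 0) d"

(* Multiplicity >= m at the point p of the effective divisor
   D = f^* {F = 0} - d E1 - d E2 in |d L2|.  Near E1, in the chart u = s, v = s t
   (resp. v = s, u = s t), D has local equation s^(-d) F(1, u, v). *)
fun dmult_ge :: "nat \<Rightarrow> poly3 \<Rightarrow> s2pt \<Rightarrow> nat \<Rightarrow> bool" where
  "dmult_ge d c (Pl x y z) m = hmult_ge c (3 * d) (x, y, z) m"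
| "dmult_ge d c (Ex1 a b) m =
     (let S = {(i,j,k) \<in> monoms (3 * d). d \<le> j + k} in
      if a = 1 then bmult_ge c S (\<lambda>(i,j,k). (j + k - d, k)) b m
      else bmult_ge c S (\<lambda>(i,j,k). (j + k - d, j)) 0 m)"
| "dmult_ge d c (Ex2 a b) m =
     (let S = {(i,j,k) \<in> monoms (3 * d). d \<le> i + k} in
      if a = 1 then bmult_ge c S (\<lambda>(i,j,k). (i + k - d, k)) b m
      else bmult_ge c S (\<lambda>(i,j,k). (i + k - d, i)) 0 m)"

definition alpha :: "nat \<Rightarrow> s2pt set \<Rightarrow> nat" where
  "alpha m Z = (LEAST d. \<exists>c. section_L d c \<and> (\<forall>p\<in>Z. dmult_ge d c p m))"

end

theory Submission
  imports Defs
begin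
lemma t2: "i + j + (k::nat) = 3 \<Longrightarrow> (i,j,k) \<in> {(3,0,0),(2,1,0),(2,0,1),(1,2,0),(1,1,1),(1,0,2),(0,3,0),(0,2,1),(0,1,2),(0,0,3)}"
proof -
  assume h: "i + j + k = 3"
  have "i = 0 \<or> i = 1 \<or> i = 2 \<or> i = 3" "j = 0 \<or> j = 1 \<or> j = 2 \<or> j = 3" using h by arith+
  then show ?thesis using h by (elim disjE) simp_all
qed
lemma monoms3: "monoms 3 = {(3,0,0),(2,1,0),(2,0,1),(1,2,0),(1,1,1),(1,0,2),(0,3,0),(0,2,1),(0,1,2),(0,0,3)}"
proof (rule set_eqI)
  fix q :: "nat \<times> nat \<times> nat"
  obtain i j k where q: "q = (i,j,k)" by (cases q) auto
  show "q \<in> monoms 3 \<longleftrightarrow> q \<in> {(3,0,0),(2,1,0),(2,0,1),(1,2,0),(1,1,1),(1,0,2),(0,3,0),(0,2,1),(0,1,2),(0,0,3)}"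
  proof
    assume "q \<in> monoms 3" then show "q \<in> {(3,0,0),(2,1,0),(2,0,1),(1,2,0),(1,1,1),(1,0,2),(0,3,0),(0,2,1),(0,1,2),(0,0,3)}"
      using t2[of i j k] q by (simp add: monoms_def)
  next
    assume "q \<in> {(3,0,0),(2,1,0),(2,0,1),(1,2,0),(1,1,1),(1,0,2),(0,3,0),(0,2,1),(0,1,2),(0,0,3)}"
    then show "q \<in> monoms 3" unfolding monoms_def by (elim insertE) auto
  qed
qed


lemma Sfilt: "{(i, j, k). (i, j, k) \<in> A \<and> P i j k} = {q \<in> A. P (fst q) (fst (snd q)) (snd (snd q))}" by auto

lemma fin_monoms: "finite (monoms n)"
proof -
  have "monoms n \<subseteq> {..n} \<times> {..n} \<times> {..n}" unfolding monoms_def by auto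
  then show ?thesis by (rule finite_subset) auto
qed

lemma df_simps[simp]: "df i 0 = 1" "df 0 (Suc a) = 0" "df (Suc i) (Suc a) = of_nat (Suc i) * df i a"
  by (auto simp: df_def fact_Suc Suc_diff_le algebra_simps add_divide_distrib)

lemma df_num[simp]: "df (numeral n) (Suc a) = of_nat (numeral n) * df (pred_numeral n) a"
  "df (numeral n) (numeral m) = of_nat (numeral n) * df (pred_numeral n) (pred_numeral m)"
  "df 0 (numeral m) = 0" "df (Suc i) (numeral m) = of_nat (Suc i) * df i (pred_numeral m)"
  by (simp_all only: numeral_eq_Suc df_simps)

lemma bm: "bmult_ge c S E t0 m \<Longrightarrow> \<alpha> + \<beta> < m \<Longrightarrow> (\<Sum>q\<in>S. c q * df (fst (E q)) \<alpha> * df (snd (E q)) \<beta>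
             * (0::complex) ^ (fst (E q) - \<alpha>) * t0 ^ (snd (E q) - \<beta>)) = 0"
  unfolding bmult_ge_def by blast


lemma sum_S3: "sum f {(i,j,k). (i,j,k) \<in> monoms 3 \<and> P i j k} = sum (\<lambda>q. if P (fst q) (fst (snd q)) (snd (snd q)) then f q else 0) (monoms 3)"
  unfolding Sfilt by (rule sum.inter_filter[OF fin_monoms])

lemma dm_Ex1_1: "dmult_ge 1 c (Ex1 1 b) m = bmult_ge c {(i,j,k). (i,j,k) \<in> monoms 3 \<and> 1 \<le> j + k} (\<lambda>(i,j,k). (j+k-1, k)) b m"
  by simp


lemma dm_Ex1_0: "a \<noteq> 1 \<Longrightarrow> dmult_ge 1 c (Ex1 a b) m = bmult_ge c {(i,j,k). (i,j,k) \<in> monoms 3 \<and> 1 \<le> j + k} (\<lambda>(i,j,k). (j+k-1, j)) 0 m"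
  by simp
lemma dm_Ex2_1: "dmult_ge 1 c (Ex2 1 b) m = bmult_ge c {(i,j,k). (i,j,k) \<in> monoms 3 \<and> 1 \<le> i + k} (\<lambda>(i,j,k). (i+k-1, k)) b m"
  by simp
lemma dm_Ex2_0: "a \<noteq> 1 \<Longrightarrow> dmult_ge 1 c (Ex2 a b) m = bmult_ge c {(i,j,k). (i,j,k) \<in> monoms 3 \<and> 1 \<le> i + k} (\<lambda>(i,j,k). (i+k-1, i)) 0 m"
  by simp

lemma hm: "hmult_ge c n (x0,y0,z0) m \<Longrightarrow> a + b + e < m \<Longrightarrow> (\<Sum>(i,j,k)\<in>monoms n. c (i,j,k) * df i a * df j b * df k e
             * x0 ^ (i - a) * y0 ^ (j - b) * z0 ^ (k - e)) = 0"
  unfolding hmult_ge_def by auto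

lemma sec_P: assumes "section_L 1 c" shows "c (3,0,0) = 0" "c (0,3,0) = 0"
proof -
  have h1: "hmult_ge c 3 (1,0,0) 1" "hmult_ge c 3 (0,1,0) 1" using assms unfolding section_L_def by auto
  show "c (3,0,0) = 0" using hm[OF h1(1), of 0 0 0] by (simp add: monoms3)
  show "c (0,3,0) = 0" using hm[OF h1(2), of 0 0 0] by (simp add: monoms3)
qed

lemma sec_nz: assumes "section_L 1 c" "\<forall>q\<in>monoms 3. c q = 0" shows False
proof -
  from assms obtain q where q: "c q \<noteq> 0" unfolding section_L_def by auto
  obtain i j k where "q = (i,j,k)" by (cases q) auto
  then have "q \<in> monoms 3" using assms(1) q unfolding section_L_def homog_def monoms_def by auto
  then show False using assms q by auto
qed

lemma key_Ex1_1:
  assumes s: "section_L 1 c" and d: "dmult_ge 1 c (Ex1 1 b) 5" and b: "b \<noteq> 0"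
  shows False
proof -
  note B = bm[OF d[unfolded dm_Ex1_1]]
  have e00: "c (2,1,0) + c(2,0,1) * b = 0" using B[of 0 0, unfolded sum_S3] by (simp add: monoms3)
  have e01: "c (2,0,1) = 0" using B[of 0 1, unfolded sum_S3] by (simp add: monoms3)
  have e10: "c (1,2,0) + c(1,1,1) * b + c(1,0,2) * b^2 = 0" using B[of 1 0, unfolded sum_S3] by (simp add: monoms3 power2_eq_square algebra_simps)
  have e11: "c(1,1,1) + 2 * c(1,0,2) * b = 0" using B[of 1 1, unfolded sum_S3] by (simp add: monoms3 algebra_simps)
  have e12: "c(1,0,2) = 0" using B[of 1 2, unfolded sum_S3] by (simp add: monoms3)
  have e20: "2 * (c (0,3,0) + c(0,2,1) * b + c(0,1,2) * b^2 + c(0,0,3) * b^3) = 0" using B[of 2 0, unfolded sum_S3] by (simp add: monoms3 algebra_simps)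
  have e21: "2 * (c(0,2,1) + 2 * c(0,1,2) * b + 3 * c(0,0,3) * b^2) = 0" using B[of 2 1, unfolded sum_S3] by (simp add: monoms3 algebra_simps)
  have e22: "2 * (2 * c(0,1,2) + 6 * c(0,0,3) * b) = 0" using B[of 2 2, unfolded sum_S3] by (simp add: monoms3 algebra_simps)
  have c3: "c(0,3,0) = 0" "c(3,0,0) = 0" using sec_P[OF s] by auto
  have "4 * (c(0,1,2) + 3*b*c(0,0,3)) = 0" using e22 by (simp add: algebra_simps)
  then have "c(0,1,2) + 3*b*c(0,0,3) = 0" by (metis mult_eq_0_iff zero_neq_numeral)
  then have z1: "c(0,1,2) = -(3*b*c(0,0,3))" by (simp add: eq_neg_iff_add_eq_0)
  have z2: "c(0,2,1) = 3*b^2*c(0,0,3)" using e21 unfolding z1 by (simp add: algebra_simps power2_eq_square)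
  have "b^3 * c(0,0,3) = 0" using e20 unfolding z1 z2 c3 by (simp add: algebra_simps power2_eq_square power3_eq_cube)
  then have z3: "c(0,0,3) = 0" using b by simp
  have z4: "c(1,1,1) = 0" "c(1,2,0) = 0" "c(2,1,0) = 0" using e11 e10 e00 e12 e01 by auto
  show False using sec_nz[OF s] z1 z2 z3 z4 c3 e12 e01 by (simp add: monoms3)
qed

lemma key_Ex1_0:
  assumes s: "section_L 1 c" and d: "dmult_ge 1 c (Ex1 a b) 5" and a: "a \<noteq> 1"
  shows False
proof -
  note B = bm[OF d[unfolded dm_Ex1_0[OF a]]]
  have "c (2,0,1) = 0" using B[of 0 0, unfolded sum_S3] by (simp add: monoms3)
  moreover have "c (2,1,0) = 0" using B[of 0 1, unfolded sum_S3] by (simp add: monoms3)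
  moreover have "c (1,0,2) = 0" using B[of 1 0, unfolded sum_S3] by (simp add: monoms3)
  moreover have "c (1,1,1) = 0" using B[of 1 1, unfolded sum_S3] by (simp add: monoms3)
  moreover have "c (1,2,0) = 0" using B[of 1 2, unfolded sum_S3] by (simp add: monoms3)
  moreover have "c (0,0,3) = 0" using B[of 2 0, unfolded sum_S3] by (simp add: monoms3)
  moreover have "c (0,1,2) = 0" using B[of 2 1, unfolded sum_S3] by (simp add: monoms3)
  moreover have "c (0,2,1) = 0" using B[of 2 2, unfolded sum_S3] by (simp add: monoms3)
  moreover have "c(0,3,0) = 0" "c(3,0,0) = 0" using sec_P[OF s] by auto
  ultimately show False using sec_nz[OF s] by (simp add: monoms3)
qed

lemma key_Ex2_1:
  assumes s: "section_L 1 c" and d: "dmult_ge 1 c (Ex2 1 b) 5" and b: "b \<noteq> 0"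
  shows False
proof -
  note B = bm[OF d[unfolded dm_Ex2_1]]
  have e00: "c (1,2,0) + c(0,2,1) * b = 0" using B[of 0 0, unfolded sum_S3] by (simp add: monoms3)
  have e01: "c (0,2,1) = 0" using B[of 0 1, unfolded sum_S3] by (simp add: monoms3)
  have e10: "c (2,1,0) + c(1,1,1) * b + c(0,1,2) * b^2 = 0" using B[of 1 0, unfolded sum_S3] by (simp add: monoms3 power2_eq_square algebra_simps)
  have e11: "c(1,1,1) + 2 * c(0,1,2) * b = 0" using B[of 1 1, unfolded sum_S3] by (simp add: monoms3 algebra_simps)
  have e12: "c(0,1,2) = 0" using B[of 1 2, unfolded sum_S3] by (simp add: monoms3)
  have e20: "2 * (c (3,0,0) + c(2,0,1) * b + c(1,0,2) * b^2 + c(0,0,3) * b^3) = 0" using B[of 2 0, unfolded sum_S3] by (simp add: monoms3 algebra_simps)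
  have e21: "2 * (c(2,0,1) + 2 * c(1,0,2) * b + 3 * c(0,0,3) * b^2) = 0" using B[of 2 1, unfolded sum_S3] by (simp add: monoms3 algebra_simps)
  have e22: "2 * (2 * c(1,0,2) + 6 * c(0,0,3) * b) = 0" using B[of 2 2, unfolded sum_S3] by (simp add: monoms3 algebra_simps)
  have c3: "c(0,3,0) = 0" "c(3,0,0) = 0" using sec_P[OF s] by auto
  have "4 * (c(1,0,2) + 3*b*c(0,0,3)) = 0" using e22 by (simp add: algebra_simps)
  then have "c(1,0,2) + 3*b*c(0,0,3) = 0" by (metis mult_eq_0_iff zero_neq_numeral)
  then have z1: "c(1,0,2) = -(3*b*c(0,0,3))" by (simp add: eq_neg_iff_add_eq_0)
  have z2: "c(2,0,1) = 3*b^2*c(0,0,3)" using e21 unfolding z1 by (simp add: algebra_simps power2_eq_square)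
  have "b^3 * c(0,0,3) = 0" using e20 unfolding z1 z2 c3 by (simp add: algebra_simps power2_eq_square power3_eq_cube)
  then have z3: "c(0,0,3) = 0" using b by simp
  have z4: "c(1,1,1) = 0" "c(2,1,0) = 0" "c(1,2,0) = 0" using e11 e10 e00 e12 e01 by auto
  show False using sec_nz[OF s] z1 z2 z3 z4 c3 e12 e01 by (simp add: monoms3)
qed

lemma key_Ex2_0:
  assumes s: "section_L 1 c" and d: "dmult_ge 1 c (Ex2 a b) 5" and a: "a \<noteq> 1"
  shows False
proof -
  note B = bm[OF d[unfolded dm_Ex2_0[OF a]]]
  have "c (0,2,1) = 0" using B[of 0 0, unfolded sum_S3] by (simp add: monoms3)
  moreover have "c (1,2,0) = 0" using B[of 0 1, unfolded sum_S3] by (simp add: monoms3)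
  moreover have "c (0,1,2) = 0" using B[of 1 0, unfolded sum_S3] by (simp add: monoms3)
  moreover have "c (1,1,1) = 0" using B[of 1 1, unfolded sum_S3] by (simp add: monoms3)
  moreover have "c (2,1,0) = 0" using B[of 1 2, unfolded sum_S3] by (simp add: monoms3)
  moreover have "c (0,0,3) = 0" using B[of 2 0, unfolded sum_S3] by (simp add: monoms3)
  moreover have "c (1,0,2) = 0" using B[of 2 1, unfolded sum_S3] by (simp add: monoms3)
  moreover have "c (2,0,1) = 0" using B[of 2 2, unfolded sum_S3] by (simp add: monoms3)
  moreover have "c(0,3,0) = 0" "c(3,0,0) = 0" using sec_P[OF s] by auto
  ultimately show False using sec_nz[OF s] by (simp add: monoms3)
qed

lemma key_Pl:
  assumes s: "section_L 1 c" and d: "dmult_ge 1 c (Pl x y z) 5"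
  shows False
proof -
  have h: "hmult_ge c 3 (x,y,z) 5" using d by simp
  note B = hm[OF h]
  have "c (3,0,0) = 0" using B[of 3 0 0] by (simp add: monoms3)
  moreover have "c (2,1,0) = 0" using B[of 2 1 0] by (simp add: monoms3)
  moreover have "c (2,0,1) = 0" using B[of 2 0 1] by (simp add: monoms3)
  moreover have "c (1,2,0) = 0" using B[of 1 2 0] by (simp add: monoms3)
  moreover have "c (1,1,1) = 0" using B[of 1 1 1] by (simp add: monoms3)
  moreover have "c (1,0,2) = 0" using B[of 1 0 2] by (simp add: monoms3)
  moreover have "c (0,3,0) = 0" using B[of 0 3 0] by (simp add: monoms3)
  moreover have "c (0,2,1) = 0" using B[of 0 2 1] by (simp add: monoms3)
  moreover have "c (0,1,2) = 0" using B[of 0 1 2] by (simp add: monoms3)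
  moreover have "c (0,0,3) = 0" using B[of 0 0 3] by (simp add: monoms3)
  ultimately show False using sec_nz[OF s] by (simp add: monoms3)
qed

lemma key:
  assumes s: "section_L 1 c" and d: "dmult_ge 1 c p 5" and v: "valid_pt p"
  shows "p = Ex1 1 0 \<or> p = Ex2 1 0"
proof (cases p)
  case (Pl x y z) then show ?thesis using key_Pl s d by blast
next
  case (Ex1 a b)
  show ?thesis
  proof (cases "a = 1")
    case True
    then have "b = 0" using key_Ex1_1[OF s] d Ex1 by blast
    then show ?thesis using Ex1 True by simp
  next
    case False then show ?thesis using key_Ex1_0[OF s] d Ex1 by blast
  qed
next
  case (Ex2 a b)
  show ?thesis
  proof (cases "a = 1")
    case True
    then have "b = 0" using key_Ex2_1[OF s] d Ex2 by blast
    then show ?thesis using Ex2 True by simp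
  next
    case False then show ?thesis using key_Ex2_0[OF s] d Ex2 by blast
  qed
qed

lemma lin_exists_aux:
  fixes Fs :: "('a \<Rightarrow> complex) set"
  shows "finite Fs \<Longrightarrow> finite U \<Longrightarrow> card Fs < card U \<Longrightarrow>
    \<exists>x. (\<exists>u\<in>U. x u \<noteq> 0) \<and> (\<forall>u. u \<notin> U \<longrightarrow> x u = 0) \<and> (\<forall>f\<in>Fs. (\<Sum>u\<in>U. f u * x u) = 0)"
proof (induction "card Fs" arbitrary: Fs U rule: less_induct)
  case less
  show ?case
  proof (cases "Fs = {}")
    case True
    from less.prems have "U \<noteq> {}" by auto
    then obtain u where "u \<in> U" by auto
    then show ?thesis using True
      by (intro exI[of _ "\<lambda>v. if v = u then 1 else 0"]) auto
  next
    case False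
    then obtain f where f: "f \<in> Fs" by auto
    define F0 where "F0 = Fs - {f}"
    have cF0: "card F0 < card Fs" unfolding F0_def using f less.prems
      by (meson card_Diff1_less)
    have fF0: "finite F0" using less.prems F0_def by auto
    have Fs_eq: "Fs = insert f F0" using f F0_def by auto
    show ?thesis
    proof (cases "\<forall>u\<in>U. f u = 0")
      case True
      have "card F0 < card U" using cF0 less.prems by linarith
      from less.hyps[OF cF0 fF0 less.prems(2) this] obtain x where
        x: "(\<exists>u\<in>U. x u \<noteq> 0)" "(\<forall>u. u \<notin> U \<longrightarrow> x u = 0)" "(\<forall>g\<in>F0. (\<Sum>u\<in>U. g u * x u) = 0)"
        by blast
      show ?thesis using x True Fs_eq by (intro exI[of _ x]) auto
    next
      case False
      then obtain u0 where u0: "u0 \<in> U" "f u0 \<noteq> 0" by auto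
      define U' where "U' = U - {u0}"
      define G where "G = (\<lambda>g. \<lambda>v. g v - g u0 * f v / f u0) ` F0"
      have fG: "finite G" using fF0 G_def by auto
      have cG: "card G \<le> card F0" unfolding G_def by (rule card_image_le[OF fF0])
      have cU': "card U' = card U - 1" unfolding U'_def using u0 less.prems by simp
      have "card F0 = card Fs - 1" unfolding F0_def using f less.prems by simp
      then have lt: "card G < card U'" using cG cU' less.prems cF0 by linarith
      have cGF: "card G < card Fs" using cG cF0 by linarith
      have fU': "finite U'" using less.prems U'_def by auto
      from less.hyps[OF cGF fG fU' lt] obtain x' where
        x': "(\<exists>u\<in>U'. x' u \<noteq> 0)" "(\<forall>u. u \<notin> U' \<longrightarrow> x' u = 0)" "(\<forall>g\<in>G. (\<Sum>u\<in>U'. g u * x' u) = 0)"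
        by blast
      define S where "S = (\<Sum>v\<in>U'. f v * x' v)"
      define x where "x = x'(u0 := - S / f u0)"
      have split: "(\<Sum>u\<in>U. g u * x u) = g u0 * x u0 + (\<Sum>u\<in>U'. g u * x' u)" for g
      proof -
        have "(\<Sum>u\<in>U. g u * x u) = g u0 * x u0 + (\<Sum>u\<in>U'. g u * x u)"
          unfolding U'_def using u0 less.prems by (simp add: sum.remove)
        also have "(\<Sum>u\<in>U'. g u * x u) = (\<Sum>u\<in>U'. g u * x' u)"
          by (rule sum.cong) (auto simp: x_def U'_def)
        finally show ?thesis .
      qed
      have "\<forall>g\<in>Fs. (\<Sum>u\<in>U. g u * x u) = 0"
      proof
        fix g assume "g \<in> Fs"
        then consider "g = f" | "g \<in> F0" using Fs_eq by auto
        then show "(\<Sum>u\<in>U. g u * x u) = 0"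
        proof cases
          case 1
          then show ?thesis using split[of f] u0 unfolding x_def S_def by simp
        next
          case 2
          then have "(\<lambda>v. g v - g u0 * f v / f u0) \<in> G" unfolding G_def by auto
          then have "(\<Sum>u\<in>U'. (g u - g u0 * f u / f u0) * x' u) = 0" using x' by auto
          then have "(\<Sum>u\<in>U'. g u * x' u) - g u0 / f u0 * S = 0"
            unfolding S_def by (simp add: algebra_simps sum_subtractf sum_distrib_left)
          then show ?thesis using split[of g] u0 unfolding x_def by (simp add: field_simps)
        qed
      qed
      moreover have "\<exists>u\<in>U. x u \<noteq> 0" using x' unfolding x_def U'_def by auto
      moreover have "\<forall>u. u \<notin> U \<longrightarrow> x u = 0" using x' u0 unfolding x_def U'_def by auto
      ultimately show ?thesis by blast
    qed
  qed
qed


fun W :: "nat \<Rightarrow> s2pt \<Rightarrow> nat \<Rightarrow> nat \<Rightarrow> nat \<Rightarrow> nat \<times> nat \<times> nat \<Rightarrow> complex" where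
  "W d (Pl x y z) a b e q = (case q of (i,j,k) \<Rightarrow> df i a * df j b * df k e * x^(i-a) * y^(j-b) * z^(k-e))"
| "W d (Ex1 a' b') a b e q = (if a' = 1
     then (case q of (i,j,k) \<Rightarrow> df (j+k-d) a * df k b * (0::complex)^(j+k-d-a) * b'^(k-b))
     else (case q of (i,j,k) \<Rightarrow> df (j+k-d) a * df j b * (0::complex)^(j+k-d-a) * 0^(j-b)))"
| "W d (Ex2 a' b') a b e q = (if a' = 1
     then (case q of (i,j,k) \<Rightarrow> df (i+k-d) a * df k b * (0::complex)^(i+k-d-a) * b'^(k-b))
     else (case q of (i,j,k) \<Rightarrow> df (i+k-d) a * df i b * (0::complex)^(i+k-d-a) * 0^(i-b)))"

lemma conv:
  fixes x g :: "'a \<Rightarrow> complex"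
  assumes "\<forall>q\<in>S. f q = x q * g q" "finite S" "U \<subseteq> S" "\<forall>q. q \<notin> U \<longrightarrow> x q = 0"
  shows "sum f S = (\<Sum>q\<in>U. g q * x q)"
proof -
  have "sum f S = (\<Sum>q\<in>S. x q * g q)" by (rule sum.cong[OF refl]) (use assms(1) in auto)
  also have "\<dots> = (\<Sum>q\<in>U. x q * g q)"
    by (rule sum.mono_neutral_right[OF assms(2,3)]) (use assms(4) in auto)
  finally show ?thesis by (simp add: mult.commute)
qed

lemma exist5:
  assumes fZ: "finite Z"
  shows "\<exists>d c. section_L d c \<and> (\<forall>p\<in>Z. dmult_ge d c p 5)"
proof -
  define d where "d = 125 * card Z + 1"
  define U where "U = (\<lambda>i. (i, 2*d - i, d)) ` {..2*d}"
  define Idx where "Idx = Z \<times> {..<5::nat} \<times> {..<5::nat} \<times> {..<5::nat}"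
  define Fs where "Fs = (\<lambda>(p,a,b,e). W d p a b e) ` Idx"
  have fU: "finite U" unfolding U_def by auto
  have "inj_on (\<lambda>i. (i, 2*d - i, d)) {..2*d}" by (auto intro: inj_onI)
  then have cU: "card U = 2*d+1" unfolding U_def by (simp add: card_image)
  have fI: "finite Idx" unfolding Idx_def using fZ by auto
  have cI: "card Idx = card Z * 125" unfolding Idx_def by (simp add: card_cartesian_product)
  have fF: "finite Fs" unfolding Fs_def using fI by auto
  have "card Fs \<le> card Idx" unfolding Fs_def by (rule card_image_le[OF fI])
  then have lt: "card Fs < card U" using cU cI d_def by linarith
  obtain x where x: "\<exists>u\<in>U. x u \<noteq> 0" "\<forall>u. u \<notin> U \<longrightarrow> x u = 0" "\<forall>f\<in>Fs. (\<Sum>u\<in>U. f u * x u) = 0"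
    using lin_exists_aux[OF fF fU lt] by blast
  have Uprop: "(i,j,k) \<in> U \<Longrightarrow> k = d \<and> i + j + k = 3 * d" for i j k unfolding U_def by auto
  have xnz: "x (i,j,k) \<noteq> 0 \<Longrightarrow> k = d \<and> i + j + k = 3 * d" for i j k using x(2) Uprop by blast
  have Um: "U \<subseteq> monoms (3*d)" unfolding monoms_def using Uprop by auto
  have eq: "(\<Sum>u\<in>U. W d p a b e u * x u) = 0" if "p \<in> Z" "a < 5" "b < 5" "e < 5" for p a b e
  proof -
    have "W d p a b e \<in> Fs" unfolding Fs_def Idx_def using that by force
    then show ?thesis using x(3) by blast
  qed
  have hom: "homog x (3*d)" unfolding homog_def using xnz by blast
  have hP: "hmult_ge x (3*d) (x0, y0, 0) d" for x0 y0
    unfolding hmult_ge_def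
  proof (clarsimp)
    fix a b e assume "a + b + e < d"
    show "(\<Sum>(i,j,k)\<in>monoms (3*d). x (i,j,k) * df i a * df j b * df k e * x0 ^ (i - a) * y0 ^ (j - b) * 0 ^ (k - e)) = 0"
    proof (rule sum.neutral, clarify)
      fix i j k
      show "x (i,j,k) * df i a * df j b * df k e * x0 ^ (i - a) * y0 ^ (j - b) * 0 ^ (k - e) = 0"
      proof (cases "x (i,j,k) = 0")
        case False
        then have "k = d" using xnz by blast
        then have "k - e > 0" using \<open>a + b + e < d\<close> by linarith
        then show ?thesis by simp
      qed simp
    qed
  qed
  have sec: "section_L d x" unfolding section_L_def using hom hP x(1) by blast
  have fS: "finite {(i,j,k). (i,j,k) \<in> monoms (3*d) \<and> P i j k}" for P
    by (rule finite_subset[OF _ fin_monoms[of "3*d"]]) auto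
  have "dmult_ge d x p 5" if pZ: "p \<in> Z" for p
  proof (cases p)
    case (Pl x0 y0 z0)
    show ?thesis unfolding Pl dmult_ge.simps hmult_ge_def
    proof (clarsimp)
      fix a b e :: nat assume h: "a + b + e < 5"
      have "(\<Sum>(i,j,k)\<in>monoms (3*d). x (i,j,k) * df i a * df j b * df k e * x0 ^ (i - a) * y0 ^ (j - b) * z0 ^ (k - e))
         = (\<Sum>q\<in>U. W d p a b e q * x q)"
        by (rule conv[OF _ fin_monoms Um x(2)]) (auto simp: Pl mult.assoc)
      also have "\<dots> = 0" using eq[OF pZ, of a b e] h by simp
      finally show "(\<Sum>(i,j,k)\<in>monoms (3*d). x (i,j,k) * df i a * df j b * df k e * x0 ^ (i - a) * y0 ^ (j - b) * z0 ^ (k - e)) = 0" .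
    qed
  next
    case (Ex1 a' b')
    have US: "U \<subseteq> {(i,j,k). (i,j,k) \<in> monoms (3*d) \<and> d \<le> j + k}" using Um Uprop by auto
    show ?thesis
    proof (cases "a' = 1")
      case True
      show ?thesis unfolding Ex1 dmult_ge.simps Let_def bmult_ge_def using True
      proof (clarsimp)
        fix a b :: nat assume h: "a + b < 5"
        have "(\<Sum>q\<in>{(i,j,k). (i,j,k) \<in> monoms (3*d) \<and> d \<le> j + k}. x q * df (fst (case q of (i,j,k) \<Rightarrow> (j + k - d, k))) a * df (snd (case q of (i,j,k) \<Rightarrow> (j + k - d, k))) b * 0 ^ (fst (case q of (i,j,k) \<Rightarrow> (j + k - d, k)) - a) * b' ^ (snd (case q of (i,j,k) \<Rightarrow> (j + k - d, k)) - b))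
          = (\<Sum>q\<in>U. W d p a b 0 q * x q)"
          by (rule conv[OF _ fS US x(2)]) (auto simp: Ex1 True mult.assoc)
        also have "\<dots> = 0" using eq[OF pZ, of a b 0] h by simp
        finally show "(\<Sum>q\<in>{(i,j,k). (i,j,k) \<in> monoms (3*d) \<and> d \<le> j + k}. x q * df (fst (case q of (i,j,k) \<Rightarrow> (j + k - d, k))) a * df (snd (case q of (i,j,k) \<Rightarrow> (j + k - d, k))) b * 0 ^ (fst (case q of (i,j,k) \<Rightarrow> (j + k - d, k)) - a) * b' ^ (snd (case q of (i,j,k) \<Rightarrow> (j + k - d, k)) - b)) = 0" .
      qed
    next
      case False
      show ?thesis unfolding Ex1 dmult_ge.simps Let_def bmult_ge_def using False
      proof (clarsimp)
        fix a b :: nat assume h: "a + b < 5"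
        have "(\<Sum>q\<in>{(i,j,k). (i,j,k) \<in> monoms (3*d) \<and> d \<le> j + k}. x q * df (fst (case q of (i,j,k) \<Rightarrow> (j + k - d, j))) a * df (snd (case q of (i,j,k) \<Rightarrow> (j + k - d, j))) b * 0 ^ (fst (case q of (i,j,k) \<Rightarrow> (j + k - d, j)) - a) * 0 ^ (snd (case q of (i,j,k) \<Rightarrow> (j + k - d, j)) - b))
          = (\<Sum>q\<in>U. W d p a b 0 q * x q)"
          by (rule conv[OF _ fS US x(2)]) (auto simp: Ex1 False mult.assoc)
        also have "\<dots> = 0" using eq[OF pZ, of a b 0] h by simp
        finally show "(\<Sum>q\<in>{(i,j,k). (i,j,k) \<in> monoms (3*d) \<and> d \<le> j + k}. x q * df (fst (case q of (i,j,k) \<Rightarrow> (j + k - d, j))) a * df (snd (case q of (i,j,k) \<Rightarrow> (j + k - d, j))) b * 0 ^ (fst (case q of (i,j,k) \<Rightarrow> (j + k - d, j)) - a) * 0 ^ (snd (case q of (i,j,k) \<Rightarrow> (j + k - d, j)) - b)) = 0" .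
      qed
    qed
  next
    case (Ex2 a' b')
    have US: "U \<subseteq> {(i,j,k). (i,j,k) \<in> monoms (3*d) \<and> d \<le> i + k}" using Um Uprop by auto
    show ?thesis
    proof (cases "a' = 1")
      case True
      show ?thesis unfolding Ex2 dmult_ge.simps Let_def bmult_ge_def using True
      proof (clarsimp)
        fix a b :: nat assume h: "a + b < 5"
        have "(\<Sum>q\<in>{(i,j,k). (i,j,k) \<in> monoms (3*d) \<and> d \<le> i + k}. x q * df (fst (case q of (i,j,k) \<Rightarrow> (i + k - d, k))) a * df (snd (case q of (i,j,k) \<Rightarrow> (i + k - d, k))) b * 0 ^ (fst (case q of (i,j,k) \<Rightarrow> (i + k - d, k)) - a) * b' ^ (snd (case q of (i,j,k) \<Rightarrow> (i + k - d, k)) - b))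
          = (\<Sum>q\<in>U. W d p a b 0 q * x q)"
          by (rule conv[OF _ fS US x(2)]) (auto simp: Ex2 True mult.assoc)
        also have "\<dots> = 0" using eq[OF pZ, of a b 0] h by simp
        finally show "(\<Sum>q\<in>{(i,j,k). (i,j,k) \<in> monoms (3*d) \<and> d \<le> i + k}. x q * df (fst (case q of (i,j,k) \<Rightarrow> (i + k - d, k))) a * df (snd (case q of (i,j,k) \<Rightarrow> (i + k - d, k))) b * 0 ^ (fst (case q of (i,j,k) \<Rightarrow> (i + k - d, k)) - a) * b' ^ (snd (case q of (i,j,k) \<Rightarrow> (i + k - d, k)) - b)) = 0" .
      qed
    next
      case False
      show ?thesis unfolding Ex2 dmult_ge.simps Let_def bmult_ge_def using False
      proof (clarsimp)
        fix a b :: nat assume h: "a + b < 5"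
        have "(\<Sum>q\<in>{(i,j,k). (i,j,k) \<in> monoms (3*d) \<and> d \<le> i + k}. x q * df (fst (case q of (i,j,k) \<Rightarrow> (i + k - d, i))) a * df (snd (case q of (i,j,k) \<Rightarrow> (i + k - d, i))) b * 0 ^ (fst (case q of (i,j,k) \<Rightarrow> (i + k - d, i)) - a) * 0 ^ (snd (case q of (i,j,k) \<Rightarrow> (i + k - d, i)) - b))
          = (\<Sum>q\<in>U. W d p a b 0 q * x q)"
          by (rule conv[OF _ fS US x(2)]) (auto simp: Ex2 False mult.assoc)
        also have "\<dots> = 0" using eq[OF pZ, of a b 0] h by simp
        finally show "(\<Sum>q\<in>{(i,j,k). (i,j,k) \<in> monoms (3*d) \<and> d \<le> i + k}. x q * df (fst (case q of (i,j,k) \<Rightarrow> (i + k - d, i))) a * df (snd (case q of (i,j,k) \<Rightarrow> (i + k - d, i))) b * 0 ^ (fst (case q of (i,j,k) \<Rightarrow> (i + k - d, i)) - a) * 0 ^ (snd (case q of (i,j,k) \<Rightarrow> (i + k - d, i)) - b)) = 0" .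
      qed
    qed
  qed
  then show ?thesis using sec by blast
qed


lemma dmult_mono: "dmult_ge d c p m' \<Longrightarrow> m \<le> m' \<Longrightarrow> dmult_ge d c p m"
  by (cases p) (auto simp: hmult_ge_def bmult_ge_def Let_def)

lemma monoms0: "monoms 0 = {(0,0,0)}" unfolding monoms_def by auto

lemma no_d0:
  assumes "section_L 0 c" "dmult_ge 0 c p m" "m \<ge> 1"
  shows False
proof -
  have h: "c q \<noteq> 0 \<Longrightarrow> q = (0,0,0)" for q using assms(1) unfolding section_L_def homog_def
    by (cases q) auto
  then have c0: "c (0,0,0) \<noteq> 0" using assms(1) unfolding section_L_def by metis
  show False
  proof (cases p)
    case (Pl x y z)
    then show False using hm[of c 0 x y z m 0 0 0] assms(2,3) c0 by (simp add: monoms0)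
  next
    case (Ex1 a b)
    then show False using assms(2,3) c0
      by (auto simp: bmult_ge_def Sfilt sum.inter_filter[OF fin_monoms] monoms0 split: if_splits dest!: spec[of _ 0])
  next
    case (Ex2 a b)
    then show False using assms(2,3) c0
      by (auto simp: bmult_ge_def Sfilt sum.inter_filter[OF fin_monoms] monoms0 split: if_splits dest!: spec[of _ 0])
  qed
qed

definition c0 :: poly3 where "c0 q = (if q = (0,0,3) then 1 else 0)"

lemma zz: "\<alpha> + \<beta> < 5 \<Longrightarrow> df 2 \<alpha> * df 3 \<beta> * (0::complex) ^ (2 - \<alpha>) * 0 ^ (3 - \<beta>) = 0"
proof (cases "2 - \<alpha> > 0")
  case False
  then have "3 - \<beta> > 0" if "\<alpha> + \<beta> < 5" using that by linarith
  then show ?thesis if "\<alpha> + \<beta> < 5" using that by simp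
qed simp

lemma c0_sec: "section_L 1 c0"
  unfolding section_L_def
proof (intro conjI)
  show "homog c0 (3*1)" unfolding homog_def c0_def by auto
  show "\<exists>q. c0 q \<noteq> 0" unfolding c0_def by auto
  show "hmult_ge c0 (3 * 1) (1, 0, 0) 1" unfolding hmult_ge_def by (simp add: monoms3 c0_def)
  show "hmult_ge c0 (3 * 1) (0, 1, 0) 1" unfolding hmult_ge_def by (simp add: monoms3 c0_def)
qed

lemma c0_Ex1: "dmult_ge 1 c0 (Ex1 1 0) 5"
  unfolding dm_Ex1_1 bmult_ge_def sum_S3 using zz by (simp add: monoms3 c0_def)

lemma c0_Ex2: "dmult_ge 1 c0 (Ex2 1 0) 5"
  unfolding dm_Ex2_1 bmult_ge_def sum_S3 using zz by (simp add: monoms3 c0_def)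

theorem theorem3:
  fixes Z :: "s2pt set"
  assumes "finite Z" and "Z \<noteq> {}" and "\<forall>p\<in>Z. valid_pt p"
  shows "Z \<subseteq> {Ex1 1 0, Ex2 1 0} \<longleftrightarrow>
    (alpha 1 Z = 1 \<and> alpha 2 Z = 1 \<and> alpha 3 Z = 1 \<and> alpha 4 Z = 1 \<and> alpha 5 Z = 1)"
proof
  assume sub: "Z \<subseteq> {Ex1 1 0, Ex2 1 0}"
  have a1: "alpha m Z = 1" if "1 \<le> m" "m \<le> 5" for m
    unfolding alpha_def
  proof (rule Least_equality)
    show "\<exists>c. section_L 1 c \<and> (\<forall>p\<in>Z. dmult_ge 1 c p m)"
    proof (intro exI conjI ballI)
      show "section_L 1 c0" by (rule c0_sec)
      fix p assume "p \<in> Z"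
      then have "p = Ex1 1 0 \<or> p = Ex2 1 0" using sub by auto
      then have "dmult_ge 1 c0 p 5" using c0_Ex1 c0_Ex2 by auto
      then show "dmult_ge 1 c0 p m" using dmult_mono that by blast
    qed
  next
    fix y assume "\<exists>c. section_L y c \<and> (\<forall>p\<in>Z. dmult_ge y c p m)"
    then obtain c where c: "section_L y c" "\<forall>p\<in>Z. dmult_ge y c p m" by blast
    obtain p where "p \<in> Z" using assms(2) by auto
    show "1 \<le> y"
    proof (rule ccontr)
      assume "\<not> 1 \<le> y"
      then have "y = 0" by simp
      then show False using no_d0[of c p m] c \<open>p \<in> Z\<close> that by auto
    qed
  qed
  then show "alpha 1 Z = 1 \<and> alpha 2 Z = 1 \<and> alpha 3 Z = 1 \<and> alpha 4 Z = 1 \<and> alpha 5 Z = 1" by simp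
next
  assume "alpha 1 Z = 1 \<and> alpha 2 Z = 1 \<and> alpha 3 Z = 1 \<and> alpha 4 Z = 1 \<and> alpha 5 Z = 1"
  then have a5: "alpha 5 Z = 1" by simp
  have ex: "\<exists>d. \<exists>c. section_L d c \<and> (\<forall>p\<in>Z. dmult_ge d c p 5)" using exist5[OF assms(1)] by blast
  have "\<exists>c. section_L (alpha 5 Z) c \<and> (\<forall>p\<in>Z. dmult_ge (alpha 5 Z) c p 5)"
    unfolding alpha_def by (rule LeastI_ex[OF ex])
  then obtain c where c: "section_L 1 c" "\<forall>p\<in>Z. dmult_ge 1 c p 5" using a5 by auto
  show "Z \<subseteq> {Ex1 1 0, Ex2 1 0}"
  proof
    fix p assume "p \<in> Z"
    then show "p \<in> {Ex1 1 0, Ex2 1 0}" using key[OF c(1)] c(2) assms(3) by blast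
  qed
qed

end
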